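(* Let $I_0,I_1$ denote the modified Bessel functions of the first kind of orders $0$ and $1$, and let $\Phi(x)=e^{-x}\left[I_0(x)+I_1(x)\right]$. Then for all real $r\ge 0$, $$\Phi(2r)=e^{-2r}\left[I_0(2r)+I_1(2r)\right]\ge \frac{\Gamma(2r+1)}{\Gamma^2(r+1)}\,2^{-2r}.$$ *)

theory Defs
  imports "HOL-Analysis.Analysis"
begin

definition besselI :: "nat \<Rightarrow> real \<Rightarrow> real" where
  "besselI n x = (\<Sum>k. (x / 2) ^ (2 * k + n) / (fact k * fact (k + n)))"

definition Phi :: "real \<Rightarrow> real" where
  "Phi x = exp (- x) * (besselI 0 x + besselI 1 x)"

end

theory Submission
  imports Defs
begin


lemma Gamma_dup_real:
  fixes s :: real assumes "s \<ge> 0"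
  shows "Gamma (s + 1/2) * Gamma (s + 1) = 2 powr (- 2* s) * sqrt pi * Gamma (2* s+1)"
proof -
  let ?z = "complex_of_real (s + 1/2)"
  have z1: "?z \<notin> \<int>\<^sub>\<le>\<^sub>0"
  proof
    assume "?z \<in> \<int>\<^sub>\<le>\<^sub>0"
    then obtain n where n: "?z = - of_nat n" by (auto elim!: nonpos_Ints_cases')
    hence "Re ?z = - real n" by (metis Re_complex_of_real of_real_minus of_real_of_nat_eq)
    thus False using assms by simp
  qed
  have z2: "?z + 1/2 \<notin> \<int>\<^sub>\<le>\<^sub>0"
  proof
    assume "?z + 1/2 \<in> \<int>\<^sub>\<le>\<^sub>0"
    then obtain n where n: "?z + 1/2 = - of_nat n" by (auto elim!: nonpos_Ints_cases')
    hence "Re (?z + 1/2) = - real n" by (metis Re_complex_of_real of_real_minus of_real_of_nat_eq)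
    thus False using assms by simp
  qed
  have dup: "Gamma ?z * Gamma (?z + 1/2) = exp ((1 - 2*?z) * of_real (ln 2)) * of_real (sqrt pi) * Gamma (2*?z)"
    by (rule Gamma_legendre_duplication[OF z1 z2])
  have e1: "?z + 1/2 = complex_of_real (s+1)" by simp
  have e2: "2 * ?z = complex_of_real (2 * s + 1)" by (simp add: algebra_simps)
  have e3: "(1 - complex_of_real (2 * s + 1)) * of_real (ln 2) = complex_of_real ((- 2 * s) * ln 2)" by (simp add: algebra_simps)
  have "complex_of_real (Gamma (s + 1/2) * Gamma (s + 1)) = complex_of_real (exp ((- 2 * s) * ln 2) * sqrt pi * Gamma (2 * s+1))"
    using dup[unfolded e1 e2, unfolded e3] by (simp only: Gamma_complex_of_real exp_of_real of_real_mult[symmetric])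
  hence "Gamma (s + 1/2) * Gamma (s + 1) = exp ((- 2 * s) * ln 2) * sqrt pi * Gamma (2 * s+1)"
    by (simp only: of_real_eq_iff)
  thus ?thesis by (simp add: powr_def)
qed

lemma Beta_G:
  fixes s :: real assumes "s \<ge> 0"
  shows "Beta (1/2) (s+1/2) = pi * (Gamma (2* s+1) / (Gamma (s+1))^2 * 2 powr (- 2* s))"
proof -
  have p: "Gamma (s+1) > 0" using assms by simp
  have "Beta (1/2) (s+1/2) = sqrt pi * Gamma (s+1/2) / Gamma (s+1)"
    by (simp add: Beta_def Gamma_one_half_real add_ac)
  also have "Gamma (s+1/2) = 2 powr (- 2* s) * sqrt pi * Gamma (2* s+1) / Gamma (s+1)"
    using Gamma_dup_real[OF assms] p by (simp add: field_simps)
  finally show ?thesis using p by (simp add: field_simps power2_eq_square)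
qed

lemma G_nat:
  "Gamma (2*real k+1) / (Gamma (real k+1))^2 * 2 powr (- 2*real k) = fact (2*k) / ((fact k)^2 * 4^k)"
proof -
  have a: "Gamma (2*real k+1) = fact (2*k)" using Gamma_fact[of "2*k", where 'a=real] by (simp add: add_ac)
  have b: "Gamma (real k+1) = fact k" using Gamma_fact[of "k", where 'a=real] by (simp add: add_ac)
  have c: "(2::real) powr (- 2 * real k) = 1 / 4^k"
  proof -
    have "(2::real) powr (- 2 * real k) = 1 / 2 powr (2 * real k)" by (simp add: powr_minus divide_inverse)
    also have "(2::real) powr (2 * real k) = (2 powr 2) powr (real k)"
      by (subst powr_powr) simp
    also have "(2::real) powr 2 = 4" by simp
    also have "(4::real) powr (real k) = 4 ^ k" by (rule powr_realpow) simp
    finally show ?thesis .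
  qed
  have c': "(2::real) powr - (2 * real k) = 1 / 4^k" using c by simp
  show ?thesis by (simp add: a b c c')
qed


lemma xcos_le_sin:
  fixes v :: real assumes "0 \<le> v" "v \<le> pi"
  shows "v * cos v \<le> sin v"
proof -
  let ?f = "\<lambda>x::real. sin x - x * cos x"
  have "?f 0 \<le> ?f v"
  proof (rule DERIV_nonneg_imp_nondecreasing[OF assms(1)])
    fix x assume x: "0 \<le> x" "x \<le> v"
    have "(?f has_real_derivative x * sin x) (at x)"
      by (auto intro!: derivative_eq_intros simp: algebra_simps)
    moreover have "x * sin x \<ge> 0" using x assms by (intro mult_nonneg_nonneg sin_ge_zero) auto
    ultimately show "\<exists>y. (?f has_real_derivative y) (at x) \<and> y \<ge> 0" by blast
  qed
  thus ?thesis by simp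
qed

lemma sin_lt_id: fixes y :: real assumes "0 < y" "y \<le> pi" shows "sin y < y"
proof -
  have c: "cos (y/2) < 1" using cos_monotone_0_pi[of 0 "y/2"] assms by simp
  have s: "sin (y/2) \<le> y/2" by (rule sin_x_le_x) (use assms in simp)
  have s0: "sin (y/2) \<ge> 0" by (rule sin_ge_zero) (use assms in auto)
  have "sin y = 2 * sin (y/2) * cos (y/2)" using sin_double[of "y/2"] by simp
  also have "\<dots> \<le> 2 * (y/2) * cos (y/2)"
    using s cos_ge_zero[of "y/2"] assms by (intro mult_right_mono) auto
  also have "\<dots> < y" using c assms by simp
  finally show ?thesis .
qed

lemma beta_bounds:
  fixes t :: real assumes "0 \<le> t" "t < pi"
  shows "0 \<le> (t + sin t)/2" "(t + sin t)/2 < pi/2"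
proof -
  show "0 \<le> (t + sin t)/2" using assms sin_ge_zero[of t] by simp
  have "sin t < pi - t" using sin_lt_id[of "pi - t"] assms by simp
  thus "(t + sin t)/2 < pi/2" by simp
qed

lemma deriv_ineq:
  fixes t :: real assumes "0 \<le> t" "t < pi"
  defines "b \<equiv> (t + sin t)/2"
  shows "sin t * cos b \<le> sin b * (1 + cos t) / 2"
proof -
  define u where "u = t/2"
  define v where "v = sin u * cos u"
  have t: "t = 2*u" by (simp add: u_def)
  have st: "sin t = 2 * sin u * cos u" unfolding t by (rule sin_double)
  have ct: "1 + cos t = 2 * (cos u)^2" unfolding t by (simp add: cos_double_cos)
  have b: "b = u + v" unfolding b_def v_def st u_def by simp
  have u0: "0 \<le> u" "u \<le> pi/2" using assms by (auto simp: u_def)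
  have cu: "cos u \<ge> 0" "sin u \<ge> 0" using u0 by (auto intro!: cos_ge_zero sin_ge_zero)
  have v0: "0 \<le> v" using cu by (simp add: v_def)
  have v1: "v \<le> pi"
  proof -
    have "v \<le> 1" unfolding v_def using sin_le_one[of u] cos_le_one[of u] cu
      by (intro mult_le_one) auto
    thus ?thesis using pi_gt3 by linarith
  qed
  have key: "v * cos v \<le> sin v" by (rule xcos_le_sin[OF v0 v1])
  have sv: "sin v \<ge> 0" using v0 v1 by (intro sin_ge_zero)
  have "sin v * (1 + (sin u)^2) - sin u * cos u * cos v \<ge> 0"
  proof -
    have "sin u * cos u * cos v = v * cos v" by (simp add: v_def)
    also have "\<dots> \<le> sin v" by (rule key)
    also have "\<dots> \<le> sin v * (1 + (sin u)^2)" using sv mult_left_mono[of 1 "1 + (sin u)^2" "sin v"] by simp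
    finally show ?thesis by simp
  qed
  hence "cos u * (sin v * (1 + (sin u)^2) - sin u * cos u * cos v) \<ge> 0"
    using cu by simp
  moreover have "sin b * (1 + cos t) / 2 - sin t * cos b
      = cos u * (sin v * (1 + (sin u)^2) - sin u * cos u * cos v)"
  proof -
    have e: "cos u * sin v * ((sin u)^2 + (cos u)^2) = cos u * sin v" by simp
    show ?thesis
    unfolding b st ct sin_add cos_add
    using sin_cos_squared_add[of u] by algebra
  qed
  ultimately show ?thesis by simp
qed

lemma key_ln:
  fixes t :: real assumes "0 \<le> t" "t < pi"
  shows "cos ((t + sin t)/2) > 0" "ln (cos ((t + sin t)/2)) \<le> cos t - 1"
proof -
  have cpos: "cos ((x + sin x)/2) > 0" if "0 \<le> x" "x < pi" for x :: real
    using beta_bounds[OF that] by (intro cos_gt_zero_pi) auto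
  show "cos ((t + sin t)/2) > 0" using cpos assms .
  let ?F = "\<lambda>x::real. cos x - 1 - ln (cos ((x + sin x)/2))"
  have "?F 0 \<le> ?F t"
  proof (rule DERIV_nonneg_imp_nondecreasing[OF assms(1)])
    fix x assume x: "0 \<le> x" "x \<le> t"
    let ?b = "(x + sin x)/2"
    have xp: "x < pi" using x assms by simp
    have cb: "cos ?b > 0" using cpos[OF x(1) xp] .
    have "(?F has_real_derivative (- sin x - (- sin ?b * ((1 + cos x)/2)) / cos ?b)) (at x)"
      using cb by (auto intro!: derivative_eq_intros simp: field_simps)
    moreover have "- sin x - (- sin ?b * ((1 + cos x)/2)) / cos ?b \<ge> 0"
    proof -
      have "sin x * cos ?b \<le> sin ?b * (1 + cos x) / 2" using deriv_ineq[OF x(1) xp] by simp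
      hence "sin x \<le> sin ?b * (1 + cos x) / 2 / cos ?b" using cb by (simp add: field_simps)
      thus ?thesis by (simp add: field_simps)
    qed
    ultimately show "\<exists>y. (?F has_real_derivative y) (at x) \<and> y \<ge> 0" by blast
  qed
  thus "ln (cos ((t + sin t)/2)) \<le> cos t - 1" by simp
qed



definition fB :: "real \<Rightarrow> real \<Rightarrow> real" where
  "fB b s = s powr (- 1/2) * (1 - s) powr (b - 1)"

definition Lf :: "real \<Rightarrow> real \<Rightarrow> real" where
  "Lf r t = exp (- (2 * r) * (1 - cos t)) * (1 + cos t)"

lemma fB_nonneg: "fB b s \<ge> 0" by (simp add: fB_def)

lemma fB_meas[measurable]: "fB b \<in> borel_measurable borel"
  unfolding fB_def by measurable

lemma Beta_nn:
  assumes "b > 0"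
  shows "(\<integral>\<^sup>+ s. ennreal (fB b s) * indicator {0..1} s \<partial>lborel) = ennreal (Beta (1/2) b)"
proof -
  have "((\<lambda>t. t powr (1/2 - 1) * (1 - t) powr (b - 1)) has_integral Beta (1/2) b) {0..1}"
    by (rule has_integral_Beta_real) (use assms in auto)
  hence h: "(fB b has_integral Beta (1/2) b) {0..1}" by (simp add: fB_def [abs_def])
  show ?thesis by (rule nn_integral_has_integral_lebesgue'[OF _ h]) (simp add: fB_nonneg)
qed

lemma sq_powr: fixes a :: real assumes "a > 0" shows "(a^2) powr c = a powr (2 * c)"
proof -
  have "a^2 = a powr 2" using assms by (simp add: powr_realpow)
  thus ?thesis by (simp only: powr_powr)
qed

definition Hs :: "real \<Rightarrow> real" where "Hs t = (sin ((t + sin t)/2))^2"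
definition Hd :: "real \<Rightarrow> real" where
  "Hd t = sin ((t + sin t)/2) * cos ((t + sin t)/2) * (1 + cos t)"

lemma Hs_deriv: "(Hs has_real_derivative Hd t) (at t)"
  unfolding Hs_def [abs_def] Hd_def
  by (auto intro!: derivative_eq_intros simp: field_simps power2_eq_square)

lemma Hd_cont: "continuous_on A Hd"
  unfolding Hd_def [abs_def] by (intro continuous_intros) auto

lemma beta_bounds2:
  fixes t :: real assumes "0 \<le> t" "t \<le> pi"
  shows "0 \<le> (t + sin t)/2" "(t + sin t)/2 \<le> pi/2"
proof -
  show "0 \<le> (t + sin t)/2" using assms sin_ge_zero[of t] by simp
  have "sin (pi - t) \<le> pi - t" by (rule sin_x_le_x) (use assms in simp)
  thus "(t + sin t)/2 \<le> pi/2" by simp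
qed

lemma Hd_nonneg: assumes "0 \<le> t" "t \<le> pi" shows "Hd t \<ge> 0"
proof -
  note bb = beta_bounds2[OF assms]
  have "sin ((t + sin t)/2) \<ge> 0" using bb by (intro sin_ge_zero) auto
  moreover have "cos ((t + sin t)/2) \<ge> 0" using bb by (intro cos_ge_zero) auto
  moreover have "1 + cos t \<ge> 0" using cos_ge_minus_one[of t] by linarith
  ultimately show ?thesis unfolding Hd_def by simp
qed

lemma Lf_nonneg: "Lf r t \<ge> 0"
proof -
  have "1 + cos t \<ge> 0" using cos_ge_minus_one[of t] by linarith
  thus ?thesis unfolding Lf_def by (intro mult_nonneg_nonneg) auto
qed

lemma pw_rhs:
  fixes r t :: real assumes r: "r \<ge> 0" and t: "0 \<le> t" "t \<le> pi"
  shows "fB (r + 1/2) (Hs t) * Hd t \<le> Lf r t"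
proof -
  define b where "b = (t + sin t)/2"
  note bb = beta_bounds2[OF t, folded b_def]
  consider "t = 0" | "t = pi" | "0 < t \<and> t < pi" using t by linarith
  thus ?thesis
  proof cases
    case 1 thus ?thesis by (simp add: fB_def Hs_def Lf_nonneg)
  next
    case 2
    have "Hs t = 1" using 2 by (simp add: Hs_def)
    thus ?thesis by (simp add: fB_def Lf_nonneg)
  next
    case 3
    have sb: "sin b > 0" using bb 3 sin_ge_zero[of t]
      unfolding b_def by (intro sin_gt_zero) auto
    have kl: "cos b > 0" "ln (cos b) \<le> cos t - 1" using key_ln[of t] 3 by (auto simp: b_def)
    have H1: "1 - Hs t = (cos b)^2" unfolding Hs_def b_def[symmetric]
      using sin_cos_squared_add[of b] by linarith
    have "fB (r + 1/2) (Hs t) * Hd t = ((sin b)^2) powr (- 1/2) * ((cos b)^2) powr (r - 1/2)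
            * (sin b * cos b * (1 + cos t))"
      unfolding fB_def H1 by (simp add: Hs_def Hd_def b_def[symmetric])
    also have "\<dots> = sin b powr (- 1) * cos b powr (2 * r - 1) * (sin b * cos b * (1 + cos t))"
      using sb kl by (simp add: sq_powr algebra_simps)
    also have "\<dots> = (sin b powr (- 1) * sin b) * (cos b powr (2 * r - 1) * cos b) * (1 + cos t)"
      by (simp add: algebra_simps)
    also have "sin b powr (- 1) * sin b = 1" using sb by (simp add: powr_minus)
    also have "cos b powr (2 * r - 1) * cos b = cos b powr (2 * r)"
      using kl powr_add[of "cos b" "2*r - 1" 1] by simp
    also have "cos b powr (2 * r) = exp (2 * r * ln (cos b))" using kl by (simp add: powr_def)
    also have "\<dots> \<le> exp (- (2 * r) * (1 - cos t))"
    proof -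
      have "2 * r * ln (cos b) \<le> 2 * r * (cos t - 1)" using mult_left_mono[OF kl(2), of "2*r"] r by simp
      hence "2 * r * ln (cos b) \<le> - (2 * r) * (1 - cos t)" by (simp add: algebra_simps)
      thus ?thesis by simp
    qed
    finally show ?thesis unfolding Lf_def using cos_ge_minus_one[of t]
      by (simp add: mult_right_mono)
  qed
qed

lemma rhs_bound:
  fixes r :: real assumes r: "r \<ge> 0"
  shows "ennreal (Beta (1/2) (r + 1/2)) \<le> (\<integral>\<^sup>+ t. ennreal (Lf r t) * indicator {0..pi} t \<partial>lborel)"
proof -
  have "ennreal (Beta (1/2) (r + 1/2)) = (\<integral>\<^sup>+ s. ennreal (fB (r + 1/2) s) * indicator {0..1} s \<partial>lborel)"
    using Beta_nn[of "r + 1/2"] r by simp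
  also have "{0..1::real} = {Hs 0..Hs pi}" by (simp add: Hs_def)
  also have "(\<integral>\<^sup>+ s. ennreal (fB (r + 1/2) s) * indicator {Hs 0..Hs pi} s \<partial>lborel)
      = (\<integral>\<^sup>+ t. ennreal (fB (r + 1/2) (Hs t)) * Hd t * indicator {0..pi} t \<partial>lborel)"
    by (rule nn_integral_substitution_aux[where g' = Hd])
       (auto intro: Hs_deriv Hd_cont Hd_nonneg)
  also have "\<dots> \<le> (\<integral>\<^sup>+ t. ennreal (Lf r t) * indicator {0..pi} t \<partial>lborel)"
  proof (rule nn_integral_mono)
    fix t :: real
    show "ennreal (fB (r + 1/2) (Hs t)) * ennreal (Hd t) * indicator {0..pi} t
          \<le> ennreal (Lf r t) * indicator {0..pi} t"
    proof (cases "t \<in> {0..pi}")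
      case True
      hence "ennreal (fB (r + 1/2) (Hs t)) * ennreal (Hd t) = ennreal (fB (r + 1/2) (Hs t) * Hd t)"
        by (simp add: ennreal_mult' fB_nonneg)
      also have "\<dots> \<le> ennreal (Lf r t)" using pw_rhs[OF r] True by (intro ennreal_leI) auto
      finally show ?thesis using True by simp
    qed simp
  qed
  finally show ?thesis .
qed



definition cnat :: "nat \<Rightarrow> real" where "cnat k = fact (2*k) / ((fact k)^2 * 4^k)"

lemma cnat_le1: "cnat k \<le> 1" and cnat_nonneg: "cnat k \<ge> 0"
proof -
  have "fact k * fact (2*k - k) * ((2*k) choose k) = (fact (2*k) :: nat)"
    by (rule binomial_fact_lemma) simp
  hence "fact k * fact k * ((2*k) choose k) = (fact (2*k) :: nat)" by simp
  hence "real (fact k * fact k * ((2*k) choose k)) = real (fact (2*k))" by (rule arg_cong)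
  hence f: "(fact (2*k) :: real) = (fact k)^2 * real ((2*k) choose k)"
    by (simp only: of_nat_mult of_nat_fact power2_eq_square)
  have "real ((2*k) choose k) \<le> 2^(2*k)"
  proof -
    have "real ((2*k) choose k) \<le> real (2^(2*k))" using binomial_le_pow2[of "2*k" k] by (rule of_nat_mono)
    thus ?thesis by simp
  qed
  also have "(2::real)^(2*k) = 4^k" by (simp add: power_mult)
  finally have "real ((2*k) choose k) \<le> 4^k" .
  thus "cnat k \<le> 1" unfolding cnat_def f by (simp add: field_simps)
  show "cnat k \<ge> 0" by (simp add: cnat_def)
qed

lemma a_even: "(2*r)^(2*n) / fact (2*n) * cnat ((2*n+1) div 2) = (2*r/2)^(2*n+0) / (fact n * fact (n+0))"
proof -
  have d: "(2*n+1) div 2 = n" by simp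
  have "(2*r)^(2*n) = (4::real)^n * r^(2*n)" by (simp add: power_mult_distrib power_mult)
  thus ?thesis unfolding d cnat_def by (simp add: field_simps power2_eq_square)
qed

lemma aux_frac: fixes X F G m :: real assumes "X \<noteq> 0" "F \<noteq> 0" "G \<noteq> 0" "m + 1 \<noteq> 0"
  shows "(2 * X * (2*m+2) * F) / (F * ((m+1) * G)^2 * (4 * X)) = 1 / (G * ((m+1) * G))"
proof -
  have K: "4*(m+1)*X*F \<noteq> 0" using assms by simp
  have e1: "(2 * X * (2*m+2) * F) = (4*(m+1)*X*F)" by (simp add: algebra_simps)
  have e2: "F * ((m+1) * G)^2 * (4 * X) = (4*(m+1)*X*F) * (G * ((m+1) * G))"
    by (simp add: power2_eq_square algebra_simps)
  show ?thesis unfolding e1 e2 using K by simp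
qed

lemma a_odd: "(2*r)^(2*n+1) / fact (2*n+1) * cnat ((2*n+1+1) div 2) = (2*r/2)^(2*n+1) / (fact n * fact (n+1))"
proof -
  have d: "(2*n+1+1) div 2 = n + 1" by simp
  have p: "(2*r)^(2*n+1) = 2 * (4::real)^n * r^(2*n+1)" by (simp add: power_mult_distrib power_mult)
  have f1: "(fact (2*(n+1)) :: real) = (2*real n+2) * fact (2*n+1)"
  proof -
    have "2*(n+1) = Suc (2*n+1)" by simp
    hence "(fact (2*(n+1)) :: real) = fact (Suc (2*n+1))" by simp
    also have "\<dots> = (2*real n+2) * fact (2*n+1)" by (simp only: fact_Suc) (simp add: algebra_simps)
    finally show ?thesis .
  qed
  have f2: "(fact (n+1) :: real) = (real n+1) * fact n" by (simp add: algebra_simps)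
  have nz: "(real n + 1) \<noteq> 0" "(fact n :: real) \<noteq> 0" "(fact (2*n+1) :: real) \<noteq> 0" "(4::real)^n \<noteq> 0" by auto
  have "(2*r)^(2*n+1) / fact (2*n+1) * cnat ((2*n+1+1) div 2)
      = (2 * 4^n * r^(2*n+1)) / fact (2*n+1) * (((2*real n+2) * fact (2*n+1)) / (((real n+1) * fact n)^2 * (4 * 4^n)))"
    unfolding d cnat_def f1 f2 p by simp
  also have "\<dots> = r^(2*n+1) * ((2 * 4^n * (2*real n+2) * fact (2*n+1)) / (fact (2*n+1) * ((real n+1) * fact n)^2 * (4 * 4^n)))"
    by (simp add: field_simps)
  also have "(2 * 4^n * (2*real n+2) * fact (2*n+1)) / (fact (2*n+1) * ((real n+1) * fact n)^2 * (4 * 4^n)) = 1 / (fact n * ((real n+1) * fact n))"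
    by (rule aux_frac) (use nz in auto)
  finally show ?thesis using f2 by (simp add: field_simps)
qed

lemma series_id:
  fixes r :: real assumes r: "r \<ge> 0"
  shows "(\<lambda>m. (2*r)^m / fact m * cnat ((m+1) div 2)) sums (besselI 0 (2*r) + besselI 1 (2*r))"
proof -
  define a where "a = (\<lambda>m. (2*r)^m / fact m * cnat ((m+1) div 2))"
  define e where "e = (\<lambda>k. (2*r/2)^(2*k+0) / (fact k * fact (k+0)) :: real)"
  define od where "od = (\<lambda>k. (2*r/2)^(2*k+1) / (fact k * fact (k+1)) :: real)"
  have sa: "summable a"
  proof (rule summable_comparison_test[OF _ summable_exp[of "2*r"]])
    show "\<exists>N. \<forall>n\<ge>N. norm (a n) \<le> inverse (fact n) * (2*r)^n"
    proof (intro exI allI impI)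
      fix n :: nat
      have "norm (a n) = (2*r)^n / fact n * cnat ((n+1) div 2)"
        unfolding a_def using r cnat_nonneg by simp
      also have "\<dots> \<le> (2*r)^n / fact n * 1"
        using r cnat_le1 by (intro mult_left_mono) auto
      finally show "norm (a n) \<le> inverse (fact n) * (2*r)^n" by (simp add: divide_inverse mult.commute)
    qed
  qed
  have se: "summable e"
  proof (rule summable_comparison_test[OF _ summable_exp[of "r^2"]])
    show "\<exists>N. \<forall>n\<ge>N. norm (e n) \<le> inverse (fact n) * (r^2)^n"
    proof (intro exI allI impI)
      fix n :: nat
      have f1: "(1::real) \<le> fact n" by simp
      have "norm (e n) = (r^2)^n / (fact n * fact n)"
        unfolding e_def using r by (simp add: power_mult)
      also have "\<dots> \<le> (r^2)^n / (fact n * 1)"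
        using f1 by (intro divide_left_mono mult_left_mono) auto
      finally show "norm (e n) \<le> inverse (fact n) * (r^2)^n" by (simp add: divide_inverse mult.commute)
    qed
  qed
  have so: "summable od"
  proof (rule summable_comparison_test[OF _ summable_mult[OF summable_exp[of "r^2"], of r]])
    show "\<exists>N. \<forall>n\<ge>N. norm (od n) \<le> r * (inverse (fact n) * (r^2)^n)"
    proof (intro exI allI impI)
      fix n :: nat
      have f1: "(1::real) \<le> fact (n+1)" by (rule fact_ge_1)
      have "norm (od n) = r * (r^2)^n / (fact n * fact (n+1))"
        unfolding od_def using r by (simp add: power_mult power_add)
      also have "\<dots> \<le> r * (r^2)^n / (fact n * 1)"
        using f1 r by (intro divide_left_mono mult_left_mono) auto
      finally show "norm (od n) \<le> r * (inverse (fact n) * (r^2)^n)" by (simp add: divide_inverse mult_ac)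
    qed
  qed
  have g: "(\<lambda>n. sum a {n*2..<n*2+2}) sums (suminf a)"
    by (rule sums_group[OF summable_sums[OF sa]]) simp
  have "(\<lambda>n. sum a {n*2..<n*2+2}) = (\<lambda>n. e n + od n)"
  proof
    fix n
    have "sum a {n*2..<n*2+2} = a (2*n) + a (2*n+1)"
      by (simp add: numeral_2_eq_2 mult.commute)
    also have "a (2*n) = e n" unfolding a_def e_def using a_even[of r n] by simp
    also have "a (2*n+1) = od n" unfolding a_def od_def using a_odd[of r n] by simp
    finally show "sum a {n*2..<n*2+2} = e n + od n" .
  qed
  moreover have "(\<lambda>n. e n + od n) sums (besselI 0 (2*r) + besselI 1 (2*r))"
    unfolding besselI_def using sums_add[OF summable_sums[OF se] summable_sums[OF so]]
    by (simp add: e_def od_def)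
  ultimately have "suminf a = besselI 0 (2*r) + besselI 1 (2*r)" using g sums_unique2 by metis
  thus ?thesis using summable_sums[OF sa] unfolding a_def by simp
qed



lemma Lsum:
  fixes r p :: real
  shows "(\<lambda>m. 2 * (exp (- (2*r)) * ((2*r)^m / fact m)) * cos p ^ (2 * ((m+1) div 2))) sums (Lf r p + Lf r (pi - p))"
proof -
  define c where "c = cos p"
  define A where "A = exp (- (2*r)) * (1 + c)"
  define B where "B = exp (- (2*r)) * (1 - c)"
  have e1: "(\<lambda>m. (2*r*c)^m / fact m) sums exp (2*r*c)"
    using exp_converges[of "2*r*c"] by (simp add: divide_inverse mult.commute scaleR_conv_of_real)
  have e2: "(\<lambda>m. (-(2*r*c))^m / fact m) sums exp (-(2*r*c))"
    using exp_converges[of "-(2*r*c)"] by (simp add: divide_inverse mult.commute scaleR_conv_of_real)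
  have s: "(\<lambda>m. A * ((2*r*c)^m / fact m) + B * ((-(2*r*c))^m / fact m)) sums (A * exp (2*r*c) + B * exp (-(2*r*c)))"
    by (intro sums_add sums_mult e1 e2)
  have val: "A * exp (2*r*c) + B * exp (-(2*r*c)) = Lf r p + Lf r (pi - p)"
    unfolding Lf_def A_def B_def c_def by (simp add: exp_add[symmetric] algebra_simps)
  have tm: "A * ((2*r*c)^m / fact m) + B * ((-(2*r*c))^m / fact m)
      = 2 * (exp (- (2*r)) * ((2*r)^m / fact m)) * c ^ (2 * ((m+1) div 2))" for m
  proof (cases "even m")
    case True
    then obtain j where j: "m = 2*j" by (rule evenE)
    have d: "2 * ((m+1) div 2) = m" using j by simp
    show ?thesis unfolding d using True
      by (simp add: A_def B_def power_mult_distrib algebra_simps add_divide_distrib[symmetric])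
  next
    case False
    then obtain j where j: "m = 2*j+1" by (rule oddE)
    have d: "2 * ((m+1) div 2) = Suc m" using j by simp
    show ?thesis unfolding d using False
      by (simp add: A_def B_def power_mult_distrib algebra_simps add_divide_distrib[symmetric])
  qed
  have "(\<lambda>m. 2 * (exp (- (2*r)) * ((2*r)^m / fact m)) * c ^ (2 * ((m+1) div 2))) sums (Lf r p + Lf r (pi - p))"
    using s unfolding val tm .
  thus ?thesis by (simp only: c_def)
qed

lemma Lf_meas[measurable]: "Lf r \<in> borel_measurable borel"
  unfolding Lf_def by measurable

lemma fold_bound:
  "(\<integral>\<^sup>+ t. ennreal (Lf r t) * indicator {0..pi} t \<partial>lborel)
     \<le> (\<integral>\<^sup>+ t. ennreal (Lf r t + Lf r (pi - t)) * indicator {0..pi/2} t \<partial>lborel)"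
proof -
  have "(\<integral>\<^sup>+ t. ennreal (Lf r t) * indicator {0..pi} t \<partial>lborel)
     \<le> (\<integral>\<^sup>+ t. ennreal (Lf r t) * indicator {0..pi/2} t + ennreal (Lf r t) * indicator {0..pi/2} (pi - t) \<partial>lborel)"
  proof (rule nn_integral_mono)
    fix t :: real
    show "ennreal (Lf r t) * indicator {0..pi} t
      \<le> ennreal (Lf r t) * indicator {0..pi/2} t + ennreal (Lf r t) * indicator {0..pi/2} (pi - t)"
      by (cases "t \<le> pi/2") (auto simp: indicator_def)
  qed
  also have "\<dots> = (\<integral>\<^sup>+ t. ennreal (Lf r t) * indicator {0..pi/2} t \<partial>lborel)
                 + (\<integral>\<^sup>+ t. ennreal (Lf r t) * indicator {0..pi/2} (pi - t) \<partial>lborel)"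
    by (rule nn_integral_add) measurable
  also have "(\<integral>\<^sup>+ t. ennreal (Lf r t) * indicator {0..pi/2} (pi - t) \<partial>lborel)
      = (\<integral>\<^sup>+ t. ennreal (Lf r (pi - t)) * indicator {0..pi/2} t \<partial>lborel)"
    by (subst nn_integral_real_affine[where c = "-1" and t = pi]) (auto simp: measurable)
  also have "(\<integral>\<^sup>+ t. ennreal (Lf r t) * indicator {0..pi/2} t \<partial>lborel)
                 + (\<integral>\<^sup>+ t. ennreal (Lf r (pi - t)) * indicator {0..pi/2} t \<partial>lborel)
       = (\<integral>\<^sup>+ t. ennreal (Lf r t) * indicator {0..pi/2} t + ennreal (Lf r (pi - t)) * indicator {0..pi/2} t \<partial>lborel)"
    by (rule nn_integral_add[symmetric]) measurable
  also have "\<dots> = (\<integral>\<^sup>+ t. ennreal (Lf r t + Lf r (pi - t)) * indicator {0..pi/2} t \<partial>lborel)"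
    by (rule nn_integral_cong) (simp add: Lf_nonneg ennreal_plus distrib_right)
  finally show ?thesis .
qed

lemma fB_sin:
  fixes t :: real assumes t: "0 < t" "t < pi/2"
  shows "fB (real k + 1/2) ((sin t)^2) * (2 * sin t * cos t) = 2 * cos t ^ (2*k)"
proof -
  have sp: "sin t > 0" using t by (intro sin_gt_zero) auto
  have cp: "cos t > 0" using t by (intro cos_gt_zero) auto
  have h: "1 - (sin t)^2 = (cos t)^2" using sin_cos_squared_add[of t] by linarith
  have "fB (real k + 1/2) ((sin t)^2) * (2 * sin t * cos t)
      = 2 * (sin t powr (- 1) * sin t) * (cos t powr (2 * real k - 1) * cos t)"
    unfolding fB_def h using sp cp by (simp add: sq_powr algebra_simps)
  also have "sin t powr (- 1) * sin t = 1" using sp by (simp add: powr_minus)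
  also have "cos t powr (2 * real k - 1) * cos t = cos t powr (2 * real k)"
    using cp powr_add[of "cos t" "2 * real k - 1" 1] by simp
  also have "cos t powr (2 * real k) = cos t ^ (2*k)"
    using cp powr_realpow[of "cos t" "2*k"] by simp
  finally show ?thesis by simp
qed

definition Fs :: "real \<Rightarrow> real \<Rightarrow> ennreal" where
  "Fs r s = (\<Sum>m. ennreal (exp (- (2*r)) * ((2*r)^m / fact m) * fB (real ((m+1) div 2) + 1/2) s))"

lemma Fs_meas[measurable]: "Fs r \<in> borel_measurable borel"
  unfolding Fs_def by measurable

lemma Fs_pw:
  fixes t r :: real assumes t: "0 < t" "t < pi/2" and r: "r \<ge> 0"
  shows "Fs r ((sin t)^2) * ennreal (2 * sin t * cos t) = ennreal (Lf r t + Lf r (pi - t))"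
proof -
  have sc: "2 * sin t * cos t \<ge> 0"
    using t sin_gt_zero[of t] cos_gt_zero[of t] by auto
  have "Fs r ((sin t)^2) * ennreal (2 * sin t * cos t)
      = (\<Sum>m. ennreal (exp (- (2*r)) * ((2*r)^m / fact m) * fB (real ((m+1) div 2) + 1/2) ((sin t)^2)) * ennreal (2 * sin t * cos t))"
    unfolding Fs_def by simp
  also have "\<dots> = (\<Sum>m. ennreal (2 * (exp (- (2*r)) * ((2*r)^m / fact m)) * cos t ^ (2 * ((m+1) div 2))))"
  proof (rule suminf_cong)
    fix m
    show "ennreal (exp (- (2*r)) * ((2*r)^m / fact m) * fB (real ((m+1) div 2) + 1/2) ((sin t)^2)) * ennreal (2 * sin t * cos t)
        = ennreal (2 * (exp (- (2*r)) * ((2*r)^m / fact m)) * cos t ^ (2 * ((m+1) div 2)))"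
    proof -
      define X where "X = exp (- (2*r)) * ((2*r)^m / fact m)"
      define b where "b = real ((m+1) div 2) + 1/2"
      have "X * fB b ((sin t)^2) * (2 * sin t * cos t) = X * (fB b ((sin t)^2) * (2 * sin t * cos t))"
        by (simp only: mult.assoc)
      also have "\<dots> = 2 * X * cos t ^ (2 * ((m+1) div 2))"
        unfolding b_def fB_sin[OF t] by simp
      finally have e: "X * fB b ((sin t)^2) * (2 * sin t * cos t) = 2 * X * cos t ^ (2 * ((m+1) div 2))" .
      have "ennreal (X * fB b ((sin t)^2)) * ennreal (2 * sin t * cos t) = ennreal (X * fB b ((sin t)^2) * (2 * sin t * cos t))"
        by (rule ennreal_mult''[symmetric]) (rule sc)
      also have "\<dots> = ennreal (2 * X * cos t ^ (2 * ((m+1) div 2)))" by (simp only: e)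
      finally show ?thesis unfolding X_def b_def .
    qed
  qed
  also have "\<dots> = ennreal (Lf r t + Lf r (pi - t))"
  proof -
    note L = Lsum[of r t]
    have nn: "\<And>m. 2 * (exp (- (2*r)) * ((2*r)^m / fact m)) * cos t ^ (2 * ((m+1) div 2)) \<ge> 0"
      using r by simp
    show ?thesis using suminf_ennreal2[OF nn sums_summable[OF L]] sums_unique[OF L] by simp
  qed
  finally show ?thesis .
qed



lemma Beta_cnat: "Beta (1/2) (real k + 1/2) = pi * cnat k"
proof -
  have "Beta (1/2) (real k + 1/2) = pi * (Gamma (2 * real k + 1) / (Gamma (real k + 1))^2 * 2 powr (- 2 * real k))"
    by (rule Beta_G) simp
  also have "\<dots> = pi * cnat k" unfolding G_nat cnat_def ..
  finally show ?thesis .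
qed

lemma lhs_main:
  fixes r :: real assumes r: "r \<ge> 0"
  shows "(\<integral>\<^sup>+ t. ennreal (Lf r t + Lf r (pi - t)) * indicator {0..pi/2} t \<partial>lborel)
     \<le> ennreal (pi * (exp (- (2*r)) * (besselI 0 (2*r) + besselI 1 (2*r))))"
proof -
  define W where "W = (\<lambda>m. exp (- (2*r)) * ((2*r)^m / fact m))"
  define kk where "kk = (\<lambda>m::nat. (m+1) div 2)"
  have W0: "W m \<ge> 0" for m using r by (simp add: W_def)
  have "(\<integral>\<^sup>+ t. ennreal (Lf r t + Lf r (pi - t)) * indicator {0..pi/2} t \<partial>lborel)
      \<le> (\<integral>\<^sup>+ t. Fs r ((sin t)^2) * ennreal (2 * sin t * cos t) * indicator {0..pi/2} t \<partial>lborel)"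
  proof (rule nn_integral_mono_AE)
    show "AE t in lborel. ennreal (Lf r t + Lf r (pi - t)) * indicator {0..pi/2} t
        \<le> Fs r ((sin t)^2) * ennreal (2 * sin t * cos t) * indicator {0..pi/2} t"
      using AE_lborel_singleton[of "0::real"] AE_lborel_singleton[of "pi/2"]
    proof eventually_elim
      case (elim t)
      show ?case
      proof (cases "t \<in> {0..pi/2}")
        case True
        hence "0 < t" "t < pi/2" using elim by auto
        thus ?thesis using Fs_pw[OF _ _ r] by simp
      qed simp
    qed
  qed
  also have "\<dots> = (\<integral>\<^sup>+ s. Fs r s * indicator {(sin 0)^2..(sin (pi/2))^2} s \<partial>lborel)"
  proof (rule nn_integral_substitution_aux[symmetric])
    show "Fs r \<in> borel_measurable borel" by measurable
    fix x :: real
    show "((\<lambda>t. (sin t)^2) has_real_derivative 2 * sin x * cos x) (at x)"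
      by (auto intro!: derivative_eq_intros)
    assume "x \<in> {0..pi/2}"
    thus "2 * sin x * cos x \<ge> 0" using sin_ge_zero[of x] cos_ge_zero[of x] by auto
  next
    show "continuous_on {0..pi/2} (\<lambda>x. 2 * sin x * cos x)" by (intro continuous_intros)
  qed auto
  also have "{(sin 0)^2..(sin (pi/2))^2} = {0..1::real}" by simp
  also have "(\<integral>\<^sup>+ s. Fs r s * indicator {0..1} s \<partial>lborel)
      = (\<integral>\<^sup>+ s. (\<Sum>m. ennreal (W m * fB (real (kk m) + 1/2) s) * indicator {0..1} s) \<partial>lborel)"
    unfolding Fs_def W_def kk_def by simp
  also have "\<dots> = (\<Sum>m. \<integral>\<^sup>+ s. ennreal (W m * fB (real (kk m) + 1/2) s) * indicator {0..1} s \<partial>lborel)"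
    by (rule nn_integral_suminf) measurable
  also have "\<dots> = (\<Sum>m. ennreal (W m * (pi * cnat (kk m))))"
  proof (rule suminf_cong)
    fix m
    have "(\<integral>\<^sup>+ s. ennreal (W m * fB (real (kk m) + 1/2) s) * indicator {0..1} s \<partial>lborel)
        = (\<integral>\<^sup>+ s. ennreal (W m) * (ennreal (fB (real (kk m) + 1/2) s) * indicator {0..1} s) \<partial>lborel)"
      using W0[of m] by (simp add: ennreal_mult' mult.assoc)
    also have "\<dots> = ennreal (W m) * (\<integral>\<^sup>+ s. ennreal (fB (real (kk m) + 1/2) s) * indicator {0..1} s \<partial>lborel)"
      by (rule nn_integral_cmult) measurable
    also have "\<dots> = ennreal (W m) * ennreal (Beta (1/2) (real (kk m) + 1/2))"
      by (subst Beta_nn) auto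
    also have "\<dots> = ennreal (W m * (pi * cnat (kk m)))"
      using W0[of m] by (simp add: Beta_cnat ennreal_mult')
    finally show "(\<integral>\<^sup>+ s. ennreal (W m * fB (real (kk m) + 1/2) s) * indicator {0..1} s \<partial>lborel)
        = ennreal (W m * (pi * cnat (kk m)))" .
  qed
  also have "\<dots> = ennreal (pi * (exp (- (2*r)) * (besselI 0 (2*r) + besselI 1 (2*r))))"
  proof -
    have S: "(\<lambda>m. (exp (- (2*r)) * pi) * ((2*r)^m / fact m * cnat ((m+1) div 2)))
        sums ((exp (- (2*r)) * pi) * (besselI 0 (2*r) + besselI 1 (2*r)))"
      by (rule sums_mult[OF series_id[OF r]])
    have eq: "(\<lambda>m. W m * (pi * cnat (kk m))) = (\<lambda>m. (exp (- (2*r)) * pi) * ((2*r)^m / fact m * cnat ((m+1) div 2)))"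
      by (simp add: W_def kk_def fun_eq_iff mult_ac)
    have nn: "\<And>m. W m * (pi * cnat (kk m)) \<ge> 0" using W0 cnat_nonneg by simp
    have S': "(\<lambda>m. W m * (pi * cnat (kk m))) sums (pi * (exp (- (2*r)) * (besselI 0 (2*r) + besselI 1 (2*r))))"
      using S unfolding eq[symmetric] by (simp add: mult_ac)
    show ?thesis using suminf_ennreal2[OF nn sums_summable[OF S']] sums_unique[OF S'] by simp
  qed
  finally show ?thesis .
qed


theorem theorem3:
  fixes r :: real
  assumes "r \<ge> 0"
  shows "Phi (2 * r) = exp (- 2 * r) * (besselI 0 (2 * r) + besselI 1 (2 * r))
       \<and> Phi (2 * r) \<ge> Gamma (2 * r + 1) / (Gamma (r + 1))\<^sup>2 * 2 powr (- 2 * r)"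
proof
  show P: "Phi (2 * r) = exp (- 2 * r) * (besselI 0 (2 * r) + besselI 1 (2 * r))"
    unfolding Phi_def by simp
  define G where "G = Gamma (2 * r + 1) / (Gamma (r + 1))\<^sup>2 * 2 powr (- 2 * r)"
  have g1: "Gamma (2 * r + 1) > 0" "Gamma (r + 1) > 0" using assms by (intro Gamma_real_pos; simp)+
  have Gpos: "G > 0" unfolding G_def using g1 by (intro mult_pos_pos divide_pos_pos) auto
  have "ennreal (pi * G) = ennreal (Beta (1/2) (r + 1/2))"
    using Beta_G[OF assms] by (simp add: G_def)
  also have "\<dots> \<le> (\<integral>\<^sup>+ t. ennreal (Lf r t) * indicator {0..pi} t \<partial>lborel)"
    by (rule rhs_bound[OF assms])
  also have "\<dots> \<le> (\<integral>\<^sup>+ t. ennreal (Lf r t + Lf r (pi - t)) * indicator {0..pi/2} t \<partial>lborel)"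
    by (rule fold_bound)
  also have "\<dots> \<le> ennreal (pi * (exp (- (2*r)) * (besselI 0 (2*r) + besselI 1 (2*r))))"
    by (rule lhs_main[OF assms])
  also have "exp (- (2*r)) * (besselI 0 (2*r) + besselI 1 (2*r)) = Phi (2 * r)"
    unfolding Phi_def by simp
  finally have "ennreal (pi * G) \<le> ennreal (pi * Phi (2 * r))" .
  hence "pi * G \<le> pi * Phi (2 * r)"
  proof -
    have pg: "pi * G > 0" using Gpos by simp
    show ?thesis using \<open>ennreal (pi * G) \<le> ennreal (pi * Phi (2 * r))\<close> pg
      unfolding ennreal_le_iff2 by linarith
  qed
  hence "G \<le> Phi (2 * r)" by simp
  thus "Phi (2 * r) \<ge> Gamma (2 * r + 1) / (Gamma (r + 1))\<^sup>2 * 2 powr (- 2 * r)"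
    unfolding G_def .
qed

end
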